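(* Let $K, L$ be compact convex subsets of $\mathbb{R}^n$ and let $\psi: \mathbb{R}^n \rightarrow \mathbb{R}^n$ be a nonsingular linear transformation. Then $L_u$ contains a translate of $K_u$ for every unit vector $u$ if and only if $(\psi L)_u$ contains a translate of $(\psi K)_u$ for every unit vector $u$.
   Context: For a unit vector $u$ and a set $S\subseteq\mathbb{R}^n$, $S_u$ denotes the orthogonal projection of $S$ onto the hyperplane $u^\perp$. *)

theory Defs
  imports "HOL-Analysis.Analysis"
begin

definition proj_hyp :: "'a::euclidean_space \<Rightarrow> 'a set \<Rightarrow> 'a set" where
  "proj_hyp u S = (\<lambda>x. x - (x \<bullet> u) *\<^sub>R u) ` S"

definition contains_translate :: "'a::real_vector set \<Rightarrow> 'a set \<Rightarrow> bool" where
  "contains_translate B A \<longleftrightarrow> (\<exists>t. (\<lambda>x. t + x) ` A \<subseteq> B)"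

end

theory Submission
  imports Defs
begin

definition CC :: "'a::euclidean_space set \<Rightarrow> 'a set \<Rightarrow> 'a \<Rightarrow> bool" where
  "CC K L v \<longleftrightarrow> (\<exists>s. \<forall>k\<in>K. \<exists>l\<in>L. \<exists>c::real. s + k = l + c *\<^sub>R v)"

lemma lemA:
  fixes u :: "'a::euclidean_space"
  assumes "norm u = 1"
  shows "contains_translate (proj_hyp u L) (proj_hyp u K) \<longleftrightarrow> CC K L u"
proof
  have uu: "u \<bullet> u = 1" using assms by (simp add: dot_square_norm)
  assume "contains_translate (proj_hyp u L) (proj_hyp u K)"
  then obtain t where t: "\<And>k. k \<in> K \<Longrightarrow> t + (k - (k \<bullet> u) *\<^sub>R u) \<in> proj_hyp u L"
    unfolding contains_translate_def proj_hyp_def by blast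
  show "CC K L u" unfolding CC_def
  proof (intro exI ballI)
    fix k assume "k \<in> K"
    from t[OF this] obtain l where "l \<in> L" "t + (k - (k \<bullet> u) *\<^sub>R u) = l - (l \<bullet> u) *\<^sub>R u"
      unfolding proj_hyp_def by blast
    then show "\<exists>l\<in>L. \<exists>c. t + k = l + c *\<^sub>R u"
      by (intro bexI[of _ l] exI[of _ "k \<bullet> u - l \<bullet> u"]) (auto simp: algebra_simps)
  qed
next
  have uu: "u \<bullet> u = 1" using assms by (simp add: dot_square_norm)
  assume "CC K L u"
  then obtain s where s: "\<And>k. k \<in> K \<Longrightarrow> \<exists>l\<in>L. \<exists>c. s + k = l + c *\<^sub>R u"
    unfolding CC_def by blast
  show "contains_translate (proj_hyp u L) (proj_hyp u K)"
    unfolding contains_translate_def proj_hyp_def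
  proof (intro exI[of _ "s - (s \<bullet> u) *\<^sub>R u"] subsetI)
    fix x assume "x \<in> (+) (s - (s \<bullet> u) *\<^sub>R u) ` (\<lambda>x. x - (x \<bullet> u) *\<^sub>R u) ` K"
    then obtain k where k: "k \<in> K" and x: "x = s - (s \<bullet> u) *\<^sub>R u + (k - (k \<bullet> u) *\<^sub>R u)" by blast
    from s[OF k] obtain l c where l: "l \<in> L" and e: "s + k = l + c *\<^sub>R u" by blast
    have "x = (s + k) - ((s + k) \<bullet> u) *\<^sub>R u" by (simp add: x algebra_simps inner_add_left)
    also have "\<dots> = (l + c *\<^sub>R u) - ((l + c *\<^sub>R u) \<bullet> u) *\<^sub>R u" by (simp only: e)
    also have "\<dots> = l - (l \<bullet> u) *\<^sub>R u" by (simp add: inner_add_left uu algebra_simps)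
    finally show "x \<in> (\<lambda>x. x - (x \<bullet> u) *\<^sub>R u) ` L" using l by blast
  qed
qed

lemma lemB:
  assumes "(a::real) \<noteq> 0"
  shows "CC K L (a *\<^sub>R v) \<longleftrightarrow> CC K L v"
proof
  assume "CC K L (a *\<^sub>R v)"
  then obtain s where s: "\<And>k. k \<in> K \<Longrightarrow> \<exists>l\<in>L. \<exists>c. s + k = l + c *\<^sub>R (a *\<^sub>R v)" unfolding CC_def by blast
  show "CC K L v" unfolding CC_def
  proof (intro exI ballI)
    fix k assume "k \<in> K"
    from s[OF this] obtain l c where "l \<in> L" "s + k = l + c *\<^sub>R (a *\<^sub>R v)" by blast
    then have "s + k = l + (c * a) *\<^sub>R v" by simp
    then show "\<exists>l\<in>L. \<exists>c. s + k = l + c *\<^sub>R v" using \<open>l \<in> L\<close> by blast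
  qed
next
  assume "CC K L v"
  then obtain s where s: "\<And>k. k \<in> K \<Longrightarrow> \<exists>l\<in>L. \<exists>c. s + k = l + c *\<^sub>R v" unfolding CC_def by blast
  show "CC K L (a *\<^sub>R v)" unfolding CC_def
  proof (intro exI ballI)
    fix k assume "k \<in> K"
    from s[OF this] obtain l c where "l \<in> L" "s + k = l + c *\<^sub>R v" by blast
    then have "s + k = l + (c / a) *\<^sub>R (a *\<^sub>R v)" using assms by simp
    then show "\<exists>l\<in>L. \<exists>c. s + k = l + c *\<^sub>R (a *\<^sub>R v)" using \<open>l \<in> L\<close> by blast
  qed
qed

lemma lemC:
  fixes \<psi> :: "'a::euclidean_space \<Rightarrow> 'a"
  assumes lin: "linear \<psi>" and inj: "inj \<psi>"
  shows "CC (\<psi> ` K) (\<psi> ` L) (\<psi> v) \<longleftrightarrow> CC K L v"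
proof
  have surj: "surj \<psi>" using linear_inj_imp_surj[OF lin inj] .
  assume "CC (\<psi> ` K) (\<psi> ` L) (\<psi> v)"
  then obtain s where s0: "\<forall>x\<in>\<psi> ` K. \<exists>y\<in>\<psi> ` L. \<exists>c. s + x = y + c *\<^sub>R \<psi> v"
    unfolding CC_def by blast
  have s: "\<exists>l\<in>L. \<exists>c. s + \<psi> k = \<psi> l + c *\<^sub>R \<psi> v" if "k \<in> K" for k
  proof -
    have "\<psi> k \<in> \<psi> ` K" using that by (rule imageI)
    with s0 obtain y c where "y \<in> \<psi> ` L" "s + \<psi> k = y + c *\<^sub>R \<psi> v" by blast
    then obtain l where "l \<in> L" "y = \<psi> l" by blast
    then show ?thesis using \<open>s + \<psi> k = y + c *\<^sub>R \<psi> v\<close> by blast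
  qed
  obtain s' where s': "s = \<psi> s'" using surj by (auto simp: surj_def)
  show "CC K L v" unfolding CC_def
  proof (intro exI[of _ s'] ballI)
    fix k assume "k \<in> K"
    from s[OF this] obtain l c where "l \<in> L" "s + \<psi> k = \<psi> l + c *\<^sub>R \<psi> v" by blast
    then have "\<psi> (s' + k) = \<psi> (l + c *\<^sub>R v)" using s' lin
      by (simp add: linear_add linear_scale)
    then have "s' + k = l + c *\<^sub>R v" using inj by (simp add: inj_eq)
    then show "\<exists>l\<in>L. \<exists>c. s' + k = l + c *\<^sub>R v" using \<open>l \<in> L\<close> by blast
  qed
next
  assume "CC K L v"
  then obtain s where s: "\<And>k. k \<in> K \<Longrightarrow> \<exists>l\<in>L. \<exists>c. s + k = l + c *\<^sub>R v"
    unfolding CC_def by blast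
  show "CC (\<psi> ` K) (\<psi> ` L) (\<psi> v)" unfolding CC_def
  proof (intro exI[of _ "\<psi> s"] ballI)
    fix x assume "x \<in> \<psi> ` K"
    then obtain k where k: "k \<in> K" "x = \<psi> k" by blast
    from s[OF k(1)] obtain l c where "l \<in> L" "s + k = l + c *\<^sub>R v" by blast
    then have "\<psi> (s + k) = \<psi> (l + c *\<^sub>R v)" by simp
    then have "\<psi> s + x = \<psi> l + c *\<^sub>R \<psi> v" using k lin
      by (simp add: linear_add linear_scale)
    then show "\<exists>y\<in>\<psi> ` L. \<exists>c. \<psi> s + x = y + c *\<^sub>R \<psi> v" using \<open>l \<in> L\<close> by blast
  qed
qed

lemma lemA':
  "(\<forall>u::'a::euclidean_space. norm u = 1 \<longrightarrow> contains_translate (proj_hyp u L) (proj_hyp u K))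
   \<longleftrightarrow> (\<forall>u. norm u = 1 \<longrightarrow> CC K L u)"
proof (intro iffI allI impI)
  fix u :: 'a
  assume "\<forall>u. norm u = 1 \<longrightarrow> contains_translate (proj_hyp u L) (proj_hyp u K)" "norm u = 1"
  then have "contains_translate (proj_hyp u L) (proj_hyp u K)" by blast
  then show "CC K L u" using lemA[of u L K] \<open>norm u = 1\<close> by blast
next
  fix u :: 'a
  assume "\<forall>u. norm u = 1 \<longrightarrow> CC K L u" "norm u = 1"
  then have "CC K L u" by blast
  then show "contains_translate (proj_hyp u L) (proj_hyp u K)" using lemA[of u L K] \<open>norm u = 1\<close> by blast
qed

theorem proposition4p1:
  fixes K L :: "'a::euclidean_space set" and \<psi> :: "'a \<Rightarrow> 'a"
  assumes "compact K" "convex K" "compact L" "convex L"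
    and "linear \<psi>" "inj \<psi>"
  shows "(\<forall>u. norm u = 1 \<longrightarrow> contains_translate (proj_hyp u L) (proj_hyp u K)) \<longleftrightarrow>
         (\<forall>u. norm u = 1 \<longrightarrow> contains_translate (proj_hyp u (\<psi> ` L)) (proj_hyp u (\<psi> ` K)))"
proof -
  have lin: "linear \<psi>" and inj: "inj \<psi>" using assms by auto
  have surj: "surj \<psi>" using linear_inj_imp_surj[OF lin inj] .
  have z: "\<psi> 0 = 0" using lin by (simp add: linear_0)
  have all1: "(\<forall>u. norm u = 1 \<longrightarrow> CC A B u) \<longleftrightarrow> (\<forall>v. v \<noteq> 0 \<longrightarrow> CC A B v)" for A B :: "'a set"
  proof
    assume h: "\<forall>u. norm u = 1 \<longrightarrow> CC A B u"
    show "\<forall>v. v \<noteq> 0 \<longrightarrow> CC A B v"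
    proof (intro allI impI)
      fix v :: 'a assume "v \<noteq> 0"
      then have "CC A B ((1 / norm v) *\<^sub>R v)" using h by simp
      then show "CC A B v" using lemB[of "1 / norm v" A B v] \<open>v \<noteq> 0\<close> by simp
    qed
  next
    assume h: "\<forall>v. v \<noteq> 0 \<longrightarrow> CC A B v"
    show "\<forall>u. norm u = 1 \<longrightarrow> CC A B u"
    proof (intro allI impI)
      fix u :: 'a assume "norm u = 1"
      then have "u \<noteq> 0" by (metis norm_zero zero_neq_one)
      then show "CC A B u" using h by blast
    qed
  qed
  have "(\<forall>u. norm u = 1 \<longrightarrow> contains_translate (proj_hyp u L) (proj_hyp u K))
     \<longleftrightarrow> (\<forall>u. norm u = 1 \<longrightarrow> CC K L u)" by (rule lemA')
  also have "\<dots> \<longleftrightarrow> (\<forall>v. v \<noteq> 0 \<longrightarrow> CC K L v)" by (rule all1)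
  also have "\<dots> \<longleftrightarrow> (\<forall>v. v \<noteq> 0 \<longrightarrow> CC (\<psi> ` K) (\<psi> ` L) v)"
  proof
    assume h: "\<forall>v. v \<noteq> 0 \<longrightarrow> CC K L v"
    show "\<forall>v. v \<noteq> 0 \<longrightarrow> CC (\<psi> ` K) (\<psi> ` L) v"
    proof (intro allI impI)
      fix v :: 'a assume "v \<noteq> 0"
      obtain w where w: "v = \<psi> w" using surj by (auto simp: surj_def)
      then have "w \<noteq> 0" using z \<open>v \<noteq> 0\<close> by metis
      then have "CC K L w" using h by blast
      then show "CC (\<psi> ` K) (\<psi> ` L) v" unfolding w using lemC[OF lin inj, of K L w] by blast
    qed
  next
    assume h: "\<forall>v. v \<noteq> 0 \<longrightarrow> CC (\<psi> ` K) (\<psi> ` L) v"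
    show "\<forall>v. v \<noteq> 0 \<longrightarrow> CC K L v"
    proof (intro allI impI)
      fix v :: 'a assume "v \<noteq> 0"
      have "\<psi> v \<noteq> 0"
      proof
        assume "\<psi> v = 0"
        then have "\<psi> v = \<psi> 0" using z by simp
        then have "v = 0" using inj by (simp add: inj_eq)
        then show False using \<open>v \<noteq> 0\<close> by simp
      qed
      then have "CC (\<psi> ` K) (\<psi> ` L) (\<psi> v)" using h by blast
      then show "CC K L v" using lemC[OF lin inj, of K L v] by blast
    qed
  qed
  also have "\<dots> \<longleftrightarrow> (\<forall>u. norm u = 1 \<longrightarrow> CC (\<psi> ` K) (\<psi> ` L) u)" by (rule all1[symmetric])
  also have "\<dots> \<longleftrightarrow> (\<forall>u. norm u = 1 \<longrightarrow> contains_translate (proj_hyp u (\<psi> ` L)) (proj_hyp u (\<psi> ` K)))"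
    by (rule lemA'[symmetric])
  finally show ?thesis .
qed

end
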